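(* Let $d\ge 1$, let $\eta\in\mathcal{X}=\mathbb{N}^{\mathbb{Z}^d}$, and let $T,T'$ be two legal toppling procedures which are both finite for the initial configuration $\eta$. Then: 1. If $T$ is stabilizing for $\eta$, then $T'\preceq_\eta T$, i.e. $T'(\infty,x,\eta)\le T(\infty,x,\eta)$ for all $x\in\mathbb{Z}^d$. 2. If $T$ and $T'$ are both stabilizing for $\eta$, then $T'(\infty,x,\eta)=T(\infty,x,\eta)$ for all $x\in\mathbb{Z}^d$; in particular, for stabilizable $\eta$ the limit configuration $\eta_\infty=\eta-\Delta T(\infty,\cdot,\eta)$ does not depend on the choice of stabilizing legal toppling procedure. 3. If $\eta$ is stabilizable, then there does not exist a legal toppling procedure that is not finite for $\eta$. 4. If $T$ is stabilizing for $\eta$, then there is at least one site $x\in\mathbb{Z}^d$ with $T(\infty,x,\eta)=0$.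
   Context: Let $\mathcal{X}=\mathbb{N}^{\mathbb{Z}^d}$ be the set of height configurations; a configuration $\eta$ is stable if $\eta(x)\le 2d-1$ for all $x$, and site $x$ is unstable if $\eta(x)\ge 2d$. The toppling matrix is $\Delta_{x,y}=2d\mathbf{1}_{x=y}-\mathbf{1}_{|x-y|=1}$, and for $n:\mathbb{Z}^d\to\mathbb{N}$ we write $(\Delta n)(x)=\sum_y\Delta_{x,y}n(y)$. A toppling procedure is a measurable map $T:[0,\infty)\times\mathbb{Z}^d\times\mathcal{X}\to\mathbb{N}$ such that for every $\eta\in\mathcal{X}$: (a) $T(0,x,\eta)=0$ for all $x$; (b) for each $x$, $t\mapsto T(t,x,\eta)$ is right-continuous, nondecreasing, with jumps of size at most one; (c) for each $x$, there are finitely many jumps at $x$ in every finite time interval; (d) there is no infinite chain of topplings at sites $x_1,x_2,\dots$ occurring at times $t_1>t_2>\cdots$ with $x_{i+1}$ a neighbor of $x_i$ for all $i$. ($T(t,x,\eta)$ is the number of topplings at $x$ during $[0,t]$; site $x$ topples at time $t$ if $T(t-,x,\eta)<T(t,x,\eta)$.) The configuration at time $t$ is $\eta_t=\eta-\Delta T(t,\cdot,\eta)$. $T$ is legal if for all $\eta$, all $t>0$ and all $x$ toppling at time $t$, $\eta_{t-}(x)\ge 2d$. $T$ is finite for $\eta$ if $T(\infty,x,\eta):=\lim_{t\to\infty}T(t,x,\eta)<\infty$ for all $x$. A legal $T$ is stabilizing for $\eta$ if it is finite for $\eta$ and $\eta_\infty:=\eta-\Delta T(\infty,\cdot,\eta)$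 is stable. A configuration $\eta$ is stabilizable if there exists a legal toppling procedure that is stabilizing for $\eta$. *)

theory Defs
  imports "HOL-Analysis.Analysis"
begin

text \<open>Sites of the lattice Z^d are functions from a finite index type 'd to int;
  d = CARD('d) >= 1. Height configurations are maps site => nat.
  Toppling procedures are maps real => site => config => nat (only times t >= 0 matter).\<close>

type_synonym 'd site = "'d \<Rightarrow> int"
type_synonym 'd config = "'d site \<Rightarrow> nat"
type_synonym 'd procedure = "real \<Rightarrow> 'd site \<Rightarrow> 'd config \<Rightarrow> nat"

definition nbr :: "'d::finite site \<Rightarrow> 'd site \<Rightarrow> bool" where
  "nbr x y \<longleftrightarrow> (\<Sum>i\<in>UNIV. \<bar>x i - y i\<bar>) = 1"

definition toppling_op :: "('d::finite site \<Rightarrow> real) \<Rightarrow> 'd site \<Rightarrow> real" where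
  "toppling_op n x = 2 * real CARD('d) * n x - (\<Sum>y\<in>{y. nbr x y}. n y)"

definition Tleft :: "'d procedure \<Rightarrow> 'd config \<Rightarrow> real \<Rightarrow> 'd site \<Rightarrow> real" where
  "Tleft T \<eta> t x = Lim (at_left t) (\<lambda>s. real (T s x \<eta>))"

definition topples :: "'d procedure \<Rightarrow> 'd config \<Rightarrow> real \<Rightarrow> 'd site \<Rightarrow> bool" where
  "topples T \<eta> t x \<longleftrightarrow> t > 0 \<and> Tleft T \<eta> t x < real (T t x \<eta>)"

definition proc_space :: "(real \<times> 'd site \<times> 'd config) measure" where
  "proc_space = restrict_space borel {0..} \<Otimes>\<^sub>M (count_space UNIV \<Otimes>\<^sub>M
      (\<Pi>\<^sub>M x\<in>UNIV. count_space UNIV))"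

definition toppling_procedure :: "'d::finite procedure \<Rightarrow> bool" where
  "toppling_procedure T \<longleftrightarrow>
     (\<lambda>(t, x, \<eta>). T t x \<eta>) \<in> measurable proc_space (count_space UNIV) \<and>
     (\<forall>\<eta>.
       (\<forall>x. T 0 x \<eta> = 0) \<and>
       (\<forall>x. \<forall>s t. 0 \<le> s \<longrightarrow> s \<le> t \<longrightarrow> T s x \<eta> \<le> T t x \<eta>) \<and>
       (\<forall>x. \<forall>t\<ge>0. continuous (at_right t) (\<lambda>s. real (T s x \<eta>))) \<and>
       (\<forall>x. \<forall>t>0. real (T t x \<eta>) - Tleft T \<eta> t x \<le> 1) \<and>
       (\<forall>x. \<forall>a b. finite {t\<in>{a..b}. topples T \<eta> t x}) \<and>
       \<not> (\<exists>xs :: nat \<Rightarrow> 'd site. \<exists>ts :: nat \<Rightarrow> real.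
            (\<forall>i. topples T \<eta> (ts i) (xs i)) \<and> (\<forall>i. ts (Suc i) < ts i) \<and>
            (\<forall>i. nbr (xs i) (xs (Suc i)))))"

definition conf_left :: "'d::finite procedure \<Rightarrow> 'd config \<Rightarrow> real \<Rightarrow> 'd site \<Rightarrow> real" where
  "conf_left T \<eta> t x = real (\<eta> x) - toppling_op (Tleft T \<eta> t) x"

definition legal :: "'d::finite procedure \<Rightarrow> bool" where
  "legal T \<longleftrightarrow> (\<forall>\<eta> t x. t > 0 \<longrightarrow> topples T \<eta> t x \<longrightarrow>
                        conf_left T \<eta> t x \<ge> 2 * real CARD('d))"

definition finite_for :: "'d procedure \<Rightarrow> 'd config \<Rightarrow> bool" where
  "finite_for T \<eta> \<longleftrightarrow> (\<forall>x. \<exists>L::real. ((\<lambda>t. real (T t x \<eta>)) \<longlongrightarrow> L) at_top)"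

definition Tinf :: "'d procedure \<Rightarrow> 'd config \<Rightarrow> 'd site \<Rightarrow> real" where
  "Tinf T \<eta> x = Lim at_top (\<lambda>t. real (T t x \<eta>))"

definition conf_inf :: "'d::finite procedure \<Rightarrow> 'd config \<Rightarrow> 'd site \<Rightarrow> real" where
  "conf_inf T \<eta> x = real (\<eta> x) - toppling_op (Tinf T \<eta>) x"

definition stable :: "('d::finite site \<Rightarrow> real) \<Rightarrow> bool" where
  "stable \<xi> \<longleftrightarrow> (\<forall>x. \<xi> x \<le> 2 * real CARD('d) - 1)"

definition stabilizing :: "'d::finite procedure \<Rightarrow> 'd config \<Rightarrow> bool" where
  "stabilizing T \<eta> \<longleftrightarrow> legal T \<and> finite_for T \<eta> \<and> stable (conf_inf T \<eta>)"

definition stabilizable :: "'d::finite config \<Rightarrow> bool" where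
  "stabilizable \<eta> \<longleftrightarrow> (\<exists>T. toppling_procedure T \<and> legal T \<and> stabilizing T \<eta>)"

end

theory Submission
  imports Defs
begin


lemma tp_zero: "toppling_procedure T \<Longrightarrow> T 0 x \<eta> = 0"
  unfolding toppling_procedure_def by blast
lemma tp_mono: "toppling_procedure T \<Longrightarrow> 0 \<le> s \<Longrightarrow> s \<le> t \<Longrightarrow> T s x \<eta> \<le> T t x \<eta>"
  unfolding toppling_procedure_def by blast
lemma tp_rc: "toppling_procedure T \<Longrightarrow> 0 \<le> t \<Longrightarrow> continuous (at_right t) (\<lambda>s. real (T s x \<eta>))"
  unfolding toppling_procedure_def by blast
lemma tp_jump: "toppling_procedure T \<Longrightarrow> 0 < t \<Longrightarrow> real (T t x \<eta>) - Tleft T \<eta> t x \<le> 1"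
  unfolding toppling_procedure_def by blast
lemma tp_chain: "toppling_procedure T \<Longrightarrow> (\<And>i. topples T \<eta> (ts i) (xs i)) \<Longrightarrow>
   (\<And>i. ts (Suc i) < ts i) \<Longrightarrow> (\<And>i. nbr (xs i) (xs (Suc i))) \<Longrightarrow> False"
  unfolding toppling_procedure_def by blast

lemma mono_max_left:
  fixes g :: "real \<Rightarrow> nat"
  assumes mono: "\<And>s t. 0 \<le> s \<Longrightarrow> s \<le> t \<Longrightarrow> g s \<le> g t" and t: "t > 0"
  shows "\<exists>s0. 0 \<le> s0 \<and> s0 < t \<and> (\<forall>s. s0 \<le> s \<and> s < t \<longrightarrow> g s = g s0)"
proof -
  let ?V = "g ` {0..<t}"
  have fin: "finite ?V"
    by (rule finite_subset[of _ "{..g t}"]) (auto intro!: mono)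
  have ne: "?V \<noteq> {}" using t by auto
  obtain s0 where s0: "s0 \<in> {0..<t}" "g s0 = Max ?V"
    using Max_in[OF fin ne] by auto
  show ?thesis
  proof (intro exI conjI allI impI)
    fix s assume s: "s0 \<le> s \<and> s < t"
    have "g s \<le> Max ?V" using s s0 fin by (intro Max_ge) auto
    moreover have "g s0 \<le> g s" using s s0 by (intro mono) auto
    ultimately show "g s = g s0" using s0 by simp
  qed (use s0 in auto)
qed

lemma mono_max_top:
  fixes g :: "real \<Rightarrow> nat"
  assumes mono: "\<And>s t. 0 \<le> s \<Longrightarrow> s \<le> t \<Longrightarrow> g s \<le> g t" and B: "\<And>t. 0 \<le> t \<Longrightarrow> g t \<le> B"
  shows "\<exists>t0. 0 \<le> t0 \<and> (\<forall>t. t0 \<le> t \<longrightarrow> g t = g t0)"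
proof -
  let ?V = "g ` {0..}"
  have fin: "finite ?V"
    by (rule finite_subset[of _ "{..B}"]) (auto intro!: B)
  have ne: "?V \<noteq> {}" by auto
  obtain s0 where s0: "s0 \<in> {0..}" "g s0 = Max ?V"
    using Max_in[OF fin ne] by auto
  show ?thesis
  proof (intro exI conjI allI impI)
    fix s assume s: "s0 \<le> s"
    have "g s \<le> Max ?V" using s s0 fin by (intro Max_ge) auto
    moreover have "g s0 \<le> g s" using s s0 by (intro mono) auto
    ultimately show "g s = g s0" using s0 by simp
  qed (use s0 in auto)
qed

lemma Tleft_rep:
  assumes tp: "toppling_procedure T" and t: "t > 0"
  shows "\<exists>s0. 0 \<le> s0 \<and> s0 < t \<and> (\<forall>s. s0 \<le> s \<and> s < t \<longrightarrow> T s x \<eta> = T s0 x \<eta>)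
     \<and> Tleft T \<eta> t x = real (T s0 x \<eta>)"
proof -
  have "\<exists>s0. 0 \<le> s0 \<and> s0 < t \<and> (\<forall>s. s0 \<le> s \<and> s < t \<longrightarrow> T s x \<eta> = T s0 x \<eta>)"
    apply (rule mono_max_left)
    subgoal for s t' by (rule tp_mono[OF tp])
    using t by simp
  then obtain s0 where s0: "0 \<le> s0" "s0 < t" "\<forall>s. s0 \<le> s \<and> s < t \<longrightarrow> T s x \<eta> = T s0 x \<eta>"
    by blast
  have "eventually (\<lambda>s. real (T s x \<eta>) = real (T s0 x \<eta>)) (at_left t)"
    using eventually_at_left_real[OF s0(2)] apply eventually_elim using s0(3) by (metis greaterThanLessThan_iff less_imp_le)
  hence "((\<lambda>s. real (T s x \<eta>)) \<longlongrightarrow> real (T s0 x \<eta>)) (at_left t)"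
    by (rule tendsto_eventually)
  hence "Tleft T \<eta> t x = real (T s0 x \<eta>)"
    unfolding Tleft_def by (rule tendsto_Lim[OF trivial_limit_at_left_real])
  with s0 show ?thesis by blast
qed

lemma Tleft_le:
  assumes tp: "toppling_procedure T" and t: "t > 0"
  shows "Tleft T \<eta> t x \<le> real (T t x \<eta>)"
  proof -
  obtain s0 where "0 \<le> s0" "s0 < t" "Tleft T \<eta> t x = real (T s0 x \<eta>)"
    using Tleft_rep[OF tp t, of x \<eta>] by (elim exE conjE) (rule that, assumption+)
  thus ?thesis using tp_mono[OF tp, of s0 t x \<eta>] by simp
qed

lemma Tleft_ge:
  assumes tp: "toppling_procedure T" and t: "t > 0" and s: "0 \<le> s" "s < t"
  shows "real (T s x \<eta>) \<le> Tleft T \<eta> t x"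
proof -
  obtain s0 where s0: "0 \<le> s0" "s0 < t" "\<forall>s. s0 \<le> s \<and> s < t \<longrightarrow> T s x \<eta> = T s0 x \<eta>"
      "Tleft T \<eta> t x = real (T s0 x \<eta>)"
    using Tleft_rep[OF tp t, of x \<eta>] by (elim exE conjE) (rule that, assumption+)
  show ?thesis
  proof (cases "s \<le> s0")
    case True thus ?thesis using s0(4) tp_mono[OF tp s(1) True] by simp
  next
    case False
    hence "T s x \<eta> = T s0 x \<eta>" using s0(3)[rule_format, of s] s by linarith
    thus ?thesis using s0(4) by simp
  qed
qed



lemma first_reach:
  assumes tp: "toppling_procedure S" and s: "0 \<le> s" and m: "m \<le> S s y \<eta>" "1 \<le> m"
  shows "\<exists>L. 0 < L \<and> L \<le> s \<and> m \<le> S L y \<eta> \<and> (\<forall>r. 0 \<le> r \<and> r < L \<longrightarrow> S r y \<eta> < m)"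
proof -
  define A where "A = {r. 0 \<le> r \<and> m \<le> S r y \<eta>}"
  define L where "L = Inf A"
  have sA: "s \<in> A" using s m unfolding A_def by auto
  have bdd: "bdd_below A" unfolding A_def by (auto intro: bdd_belowI[of _ 0])
  have Ls: "L \<le> s" unfolding L_def using sA bdd by (rule cInf_lower)
  have L0: "0 \<le> L" unfolding L_def using sA by (intro cInf_greatest) (auto simp: A_def)
  have below: "S r y \<eta> < m" if "0 \<le> r" "r < L" for r
  proof (rule ccontr)
    assume "\<not> S r y \<eta> < m"
    hence "r \<in> A" using that unfolding A_def by auto
    hence "L \<le> r" unfolding L_def using bdd by (rule cInf_lower)
    thus False using that by simp
  qed
  have SL: "m \<le> S L y \<eta>"
  proof (rule ccontr)
    assume nl: "\<not> m \<le> S L y \<eta>"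
    have "((\<lambda>r. real (S r y \<eta>)) \<longlongrightarrow> real (S L y \<eta>)) (at_right L)"
      using tp_rc[OF tp L0, of y \<eta>] by (simp add: continuous_within)
    hence "eventually (\<lambda>r. dist (real (S r y \<eta>)) (real (S L y \<eta>)) < 1/2) (at_right L)"
      by (rule tendstoD) simp
    then obtain b where d: "L < b" "\<forall>r>L. r < b \<longrightarrow>
        dist (real (S r y \<eta>)) (real (S L y \<eta>)) < 1/2"
      unfolding eventually_at_right_field by blast
    have "\<exists>a\<in>A. a < b" unfolding L_def using sA d by (intro cInf_lessD) (auto simp: L_def)
    then obtain a where a: "a \<in> A" "a < b" by blast
    have "L \<le> a" unfolding L_def using a(1) bdd by (rule cInf_lower)
    moreover have "a \<noteq> L" using a(1) nl unfolding A_def by auto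
    ultimately have "a > L" by simp
    hence "dist (real (S a y \<eta>)) (real (S L y \<eta>)) < 1/2" using d a by blast
    hence h: "\<bar>real (S a y \<eta>) - real (S L y \<eta>)\<bar> < 1/2" by (simp add: dist_real_def)
    have "real (S a y \<eta>) < real (S L y \<eta>) + 1" using h abs_less_iff[of "real (S a y \<eta>) - real (S L y \<eta>)" "1/2"] by linarith
    moreover have "real (S L y \<eta>) < real (S a y \<eta>) + 1" using h abs_less_iff[of "real (S a y \<eta>) - real (S L y \<eta>)" "1/2"] by linarith
    ultimately
    have "S a y \<eta> < S L y \<eta> + 1" "S L y \<eta> < S a y \<eta> + 1" by linarith+
    hence "S a y \<eta> = S L y \<eta>" by linarith
    thus False using a(1) nl unfolding A_def by auto
  qed
  have "L \<noteq> 0" using SL m tp_zero[OF tp, of y \<eta>] by auto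
  with L0 Ls SL below show ?thesis by (intro exI[of _ L]) auto
qed

lemma first_reach_topples:
  assumes tp: "toppling_procedure S" and L: "0 < L" "m \<le> S L y \<eta>" "1 \<le> m"
    and below: "\<forall>r. 0 \<le> r \<and> r < L \<longrightarrow> S r y \<eta> < m"
  shows "topples S \<eta> L y \<and> Tleft S \<eta> L y = real m - 1"
proof -
  obtain s0 where s0: "0 \<le> s0" "s0 < L" "Tleft S \<eta> L y = real (S s0 y \<eta>)"
    using Tleft_rep[OF tp L(1), of y \<eta>] by (elim exE conjE) (rule that, assumption+)
  have "S s0 y \<eta> < m" using below s0 by blast
  hence le: "Tleft S \<eta> L y \<le> real m - 1" using s0(3) by linarith
  have "real (S L y \<eta>) - Tleft S \<eta> L y \<le> 1" by (rule tp_jump[OF tp L(1)])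
  hence "Tleft S \<eta> L y = real m - 1" using le L(2) by linarith
  moreover have "topples S \<eta> L y" unfolding topples_def using L le by simp
  ultimately show ?thesis by simp
qed



lemma nbr_bound: "nbr x y \<Longrightarrow> \<bar>x i - y i\<bar> \<le> 1"
proof -
  assume "nbr x y"
  hence "(\<Sum>j\<in>UNIV. \<bar>x j - y j\<bar>) = 1" by (simp add: nbr_def)
  moreover have "\<bar>x i - y i\<bar> \<le> (\<Sum>j\<in>UNIV. \<bar>x j - y j\<bar>)"
    by (rule member_le_sum) auto
  ultimately show ?thesis by simp
qed

lemma nbr_finite: "finite {y. nbr (x::'d::finite site) y}"
proof (rule finite_subset)
  show "{y. nbr x y} \<subseteq> (\<Pi>\<^sub>E i\<in>UNIV. {x i - 1..x i + 1})"
  proof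
    fix y assume "y \<in> {y. nbr x y}"
    hence ny: "nbr x y" by simp
    have "y i \<in> {x i - 1..x i + 1}" for i using nbr_bound[OF ny, of i] by (simp add: abs_le_iff)
    thus "y \<in> (\<Pi>\<^sub>E i\<in>UNIV. {x i - 1..x i + 1})" by (simp add: PiE_UNIV_domain)
  qed
  show "finite (\<Pi>\<^sub>E i\<in>(UNIV::'d set). {x i - 1..x i + 1})"
    by (rule finite_PiE) auto
qed

lemma nbr_card: "2 * CARD('d) \<le> card {y. nbr (x::'d::finite site) y}"
proof -
  define f where "f = (\<lambda>p::'d \<times> int. x(fst p := x (fst p) + snd p))"
  have fi: "f p k = (if k = fst p then x k + snd p else x k)" for p k
    by (simp add: f_def)
  have inj: "inj_on f (UNIV \<times> {-1, 1})"
  proof (rule inj_onI)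
    fix p q assume p: "p \<in> UNIV \<times> {-1,1::int}" and q: "q \<in> UNIV \<times> {-1,1::int}" and eq: "f p = f q"
    have sp: "snd p \<noteq> 0" using p by auto
    have sq: "snd q \<noteq> 0" using q by auto
    have e1: "f p (fst p) = f q (fst p)" using eq by simp
    have "fst p = fst q"
    proof (rule ccontr)
      assume "fst p \<noteq> fst q"
      hence "f q (fst p) = x (fst p)" unfolding fi by simp
      moreover have "f p (fst p) = x (fst p) + snd p" unfolding fi by simp
      ultimately show False using e1 sp by simp
    qed
    moreover have "f q (fst p) = x (fst p) + snd q" unfolding fi using \<open>fst p = fst q\<close> by simp
    moreover have "f p (fst p) = x (fst p) + snd p" unfolding fi by simp
    ultimately have "snd p = snd q" using e1 by simp
    thus "p = q" using \<open>fst p = fst q\<close> by (simp add: prod_eq_iff)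
  qed
  have sub: "f ` (UNIV \<times> {-1,1}) \<subseteq> {y. nbr x y}"
  proof
    fix z assume "z \<in> f ` (UNIV \<times> {-1,1::int})"
    then obtain p where p: "p \<in> UNIV \<times> {-1,1::int}" and z: "z = f p" by blast
    have ab: "\<bar>snd p\<bar> = 1" using p by auto
    have "(\<Sum>j\<in>UNIV. \<bar>x j - f p j\<bar>) = (\<Sum>j\<in>UNIV. if j = fst p then 1 else 0)"
    proof (rule sum.cong)
      fix j show "\<bar>x j - f p j\<bar> = (if j = fst p then 1 else 0)"
        unfolding fi using ab by simp
    qed simp
    also have "\<dots> = 1" by simp
    finally show "z \<in> {y. nbr x y}" by (simp add: nbr_def z)
  qed
  have "card ((UNIV::'d set) \<times> {-1,1::int}) = CARD('d) * 2" by (simp add: card_cartesian_product)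
  hence "card (f ` (UNIV \<times> {-1,1})) = CARD('d) * 2" using card_image[OF inj] by simp
  moreover have "card (f ` (UNIV \<times> {-1,1})) \<le> card {y. nbr x y}"
    by (rule card_mono[OF nbr_finite sub])
  ultimately show ?thesis by simp
qed

lemma const_tendsto:
  fixes g :: "real \<Rightarrow> nat"
  assumes "\<forall>t\<ge>t0. g t = (c::nat)"
  shows "((\<lambda>t. real (g t)) \<longlongrightarrow> real c) at_top"
  by (rule tendsto_eventually) (unfold eventually_at_top_linorder, use assms in blast)

lemma bounded_stuff:
  assumes tp: "toppling_procedure T" and B: "\<And>t. 0 \<le> t \<Longrightarrow> T t x \<eta> \<le> B"
  shows "\<exists>t0\<ge>0. (\<forall>t\<ge>t0. T t x \<eta> = T t0 x \<eta>) \<and> (\<forall>t\<ge>0. T t x \<eta> \<le> T t0 x \<eta>)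
      \<and> Tinf T \<eta> x = real (T t0 x \<eta>) \<and> ((\<lambda>t. real (T t x \<eta>)) \<longlongrightarrow> real (T t0 x \<eta>)) at_top"
proof -
  have "\<exists>t0. 0 \<le> t0 \<and> (\<forall>t. t0 \<le> t \<longrightarrow> T t x \<eta> = T t0 x \<eta>)"
    apply (rule mono_max_top[of _ B])
    subgoal for s t' by (rule tp_mono[OF tp])
    by (rule B)
  then obtain t0 where t0: "0 \<le> t0" "\<forall>t. t0 \<le> t \<longrightarrow> T t x \<eta> = T t0 x \<eta>" by blast
  have lim: "((\<lambda>t. real (T t x \<eta>)) \<longlongrightarrow> real (T t0 x \<eta>)) at_top"
    by (rule const_tendsto[of t0]) (use t0 in blast)
  have le: "T t x \<eta> \<le> T t0 x \<eta>" if "0 \<le> t" for t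
  proof (cases "t \<le> t0")
    case True thus ?thesis using tp_mono[OF tp that True] by simp
  next
    case False thus ?thesis using t0(2)[rule_format, of t] by simp
  qed
  have "Tinf T \<eta> x = real (T t0 x \<eta>)" unfolding Tinf_def
    by (rule tendsto_Lim[OF _ lim]) simp
  with t0 le lim show ?thesis by blast
qed

lemma finite_stuff:
  assumes tp: "toppling_procedure T" and fin: "finite_for T \<eta>"
  shows "\<exists>t0\<ge>0. (\<forall>t\<ge>t0. T t x \<eta> = T t0 x \<eta>) \<and> (\<forall>t\<ge>0. T t x \<eta> \<le> T t0 x \<eta>)
      \<and> Tinf T \<eta> x = real (T t0 x \<eta>) \<and> ((\<lambda>t. real (T t x \<eta>)) \<longlongrightarrow> real (T t0 x \<eta>)) at_top"
proof -
  obtain L where L: "((\<lambda>t. real (T t x \<eta>)) \<longlongrightarrow> L) at_top" using fin unfolding finite_for_def by blast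
  hence "eventually (\<lambda>t. dist (real (T t x \<eta>)) L < 1) at_top" by (rule tendstoD) simp
  then obtain t1 where t1: "\<And>t. t \<ge> t1 \<Longrightarrow> dist (real (T t x \<eta>)) L < 1"
    unfolding eventually_at_top_linorder by blast
  define t2 where "t2 = max t1 0"
  have "dist (real (T t2 x \<eta>)) L < 1" using t1[of t2] by (simp add: t2_def)
  hence "real (T t2 x \<eta>) < L + 1" unfolding dist_real_def by linarith
  have B: "T t x \<eta> \<le> nat \<lceil>L + 1\<rceil>" if "0 \<le> t" for t
  proof -
    have "real (T t x \<eta>) < L + 1"
    proof (cases "t \<le> t2")
      case True
      hence "T t x \<eta> \<le> T t2 x \<eta>" using tp_mono[OF tp that True] by simp
      thus ?thesis using \<open>real (T t2 x \<eta>) < L + 1\<close> by linarith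
    next
      case False
      hence "dist (real (T t x \<eta>)) L < 1" using t1[of t] by (simp add: t2_def)
      thus ?thesis unfolding dist_real_def by linarith
    qed
    thus ?thesis by linarith
  qed
  show ?thesis by (rule bounded_stuff[OF tp B])
qed



lemma N_exists:
  assumes tp: "toppling_procedure T" and fin: "finite_for T \<eta>"
  shows "\<exists>N::'d::finite site \<Rightarrow> nat. \<forall>x. (\<forall>t\<ge>0. T t x \<eta> \<le> N x) \<and> (\<exists>t0\<ge>0. T t0 x \<eta> = N x)
     \<and> Tinf T \<eta> x = real (N x)"
proof -
  have "\<forall>x. \<exists>n. (\<forall>t\<ge>0. T t x \<eta> \<le> n) \<and> (\<exists>t0\<ge>0. T t0 x \<eta> = n) \<and> Tinf T \<eta> x = real n"
  proof
    fix x
    obtain t0 where t0: "t0 \<ge> 0" "\<forall>t\<ge>0. T t x \<eta> \<le> T t0 x \<eta>" "Tinf T \<eta> x = real (T t0 x \<eta>)"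
      using finite_stuff[OF tp fin, of x] by blast
    show "\<exists>n. (\<forall>t\<ge>0. T t x \<eta> \<le> n) \<and> (\<exists>t0\<ge>0. T t0 x \<eta> = n) \<and> Tinf T \<eta> x = real n"
      by (rule exI[of _ "T t0 x \<eta>"]) (use t0 in blast)
  qed
  thus ?thesis by (rule choice)
qed

lemma stab_N:
  fixes T :: "'d::finite procedure"
  assumes "stable (conf_inf T \<eta>)" and "\<forall>x. Tinf T \<eta> x = real (N x)"
  shows "real (\<eta> x) - (2 * real CARD('d) * real (N x) - (\<Sum>y\<in>{y. nbr x y}. real (N y)))
      \<le> 2 * real CARD('d::finite) - 1"
proof -
  have "Tinf T \<eta> = (\<lambda>x. real (N x))" using assms(2) by auto
  thus ?thesis using assms(1) unfolding stable_def conf_inf_def toppling_op_def by simp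
qed

lemma least_action:
  fixes N :: "'d::finite site \<Rightarrow> nat"
  assumes tp: "toppling_procedure S" and lg: "legal S"
    and stab: "\<And>x. real (\<eta> x) - (2 * real CARD('d) * real (N x) - (\<Sum>y\<in>{y. nbr x y}. real (N y)))
      \<le> 2 * real CARD('d) - 1"
  shows "0 \<le> t \<Longrightarrow> S t x \<eta> \<le> N x"
proof (rule ccontr)
  assume t: "0 \<le> t" and bad: "\<not> S t x \<eta> \<le> N x"
  define P where "P = (\<lambda>(n::nat) (p::'d site \<times> real). 0 < snd p \<and> topples S \<eta> (snd p) (fst p)
      \<and> Tleft S \<eta> (snd p) (fst p) = real (N (fst p)))"
  define Q where "Q = (\<lambda>(n::nat) (p::'d site \<times> real) (q::'d site \<times> real). nbr (fst p) (fst q) \<and> snd q < snd p)"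
  have reach: "\<exists>L. 0 < L \<and> L \<le> s \<and> topples S \<eta> L y \<and> Tleft S \<eta> L y = real (N y)"
    if h1: "0 \<le> s" and h2: "N y + 1 \<le> S s y \<eta>" for s y
  proof -
    obtain L where L: "0 < L" "L \<le> s" "N y + 1 \<le> S L y \<eta>" "\<forall>r. 0 \<le> r \<and> r < L \<longrightarrow> S r y \<eta> < N y + 1"
      using first_reach[OF tp h1 h2] by auto
    show ?thesis using first_reach_topples[OF tp L(1) L(3) _ L(4)] L(1,2) by auto
  qed
  have init: "\<exists>p. P 0 p"
    using reach[OF t, of x] bad unfolding P_def by auto
  have step: "\<exists>q. P (Suc n) q \<and> Q n p q" if Pp: "P n p" for n p
  proof -
    obtain x L where p: "p = (x, L)" by (cases p)
    have L: "0 < L" "topples S \<eta> L x" "Tleft S \<eta> L x = real (N x)" using Pp unfolding P_def p by auto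
    have "conf_left S \<eta> L x \<ge> 2 * real CARD('d)" using lg L unfolding legal_def by blast
    hence leg: "real (\<eta> x) - (2 * real CARD('d) * real (N x) - (\<Sum>y\<in>{y. nbr x y}. Tleft S \<eta> L y))
       \<ge> 2 * real CARD('d)"
      unfolding conf_left_def toppling_op_def L(3) .
    have "\<exists>y\<in>{y. nbr x y}. Tleft S \<eta> L y > real (N y)"
    proof (rule ccontr)
      assume "\<not> ?thesis"
      hence "(\<Sum>y\<in>{y. nbr x y}. Tleft S \<eta> L y) \<le> (\<Sum>y\<in>{y. nbr x y}. real (N y))"
        by (intro sum_mono) (auto simp: not_less)
      thus False using leg stab[of x] by linarith
    qed
    then obtain y where y: "nbr x y" "Tleft S \<eta> L y > real (N y)" by auto
    obtain s0 where s0: "0 \<le> s0" "s0 < L" "Tleft S \<eta> L y = real (S s0 y \<eta>)"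
      using Tleft_rep[OF tp L(1), of y \<eta>] by (elim exE conjE) (rule that, assumption+)
    have "N y + 1 \<le> S s0 y \<eta>" using y(2) s0(3) by linarith
    then obtain L' where L': "0 < L'" "L' \<le> s0" "topples S \<eta> L' y" "Tleft S \<eta> L' y = real (N y)"
      using reach[OF s0(1)] by blast
    show ?thesis
      by (rule exI[of _ "(y, L')"]) (use L' s0 y in \<open>auto simp: P_def Q_def p\<close>)
  qed
  obtain f where f: "\<And>n. P n (f n) \<and> Q n (f n) (f (Suc n))"
    using dependent_nat_choice[of P Q, OF init step] by blast
  show False
  proof (rule tp_chain[OF tp, of \<eta> "\<lambda>i. snd (f i)" "\<lambda>i. fst (f i)"])
    fix i
    show "topples S \<eta> (snd (f i)) (fst (f i))" using f[of i] unfolding P_def by auto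
    show "snd (f (Suc i)) < snd (f i)" using f[of i] unfolding Q_def by auto
    show "nbr (fst (f i)) (fst (f (Suc i)))" using f[of i] unfolding Q_def by auto
  qed
qed

lemma some_zero:
  fixes N :: "'d::finite site \<Rightarrow> nat"
  assumes tp: "toppling_procedure T" and lg: "legal T"
    and N: "\<And>x. (\<forall>t\<ge>0. T t x \<eta> \<le> N x) \<and> (\<exists>t0\<ge>0. T t0 x \<eta> = N x)"
    and stab: "\<And>x. real (\<eta> x) - (2 * real CARD('d) * real (N x) - (\<Sum>y\<in>{y. nbr x y}. real (N y)))
      \<le> 2 * real CARD('d) - 1"
  shows "\<exists>x. N x = 0"
proof (rule ccontr)
  assume nz: "\<not> ?thesis"
  have pos: "1 \<le> N x" for x
  proof (rule ccontr)
    assume "\<not> 1 \<le> N x"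
    hence "N x = 0" by simp
    thus False using nz by blast
  qed
  define P where "P = (\<lambda>(n::nat) (p::'d site \<times> real). 0 < snd p \<and> topples T \<eta> (snd p) (fst p)
      \<and> Tleft T \<eta> (snd p) (fst p) = real (N (fst p)) - 1)"
  define Q where "Q = (\<lambda>(n::nat) (p::'d site \<times> real) (q::'d site \<times> real). nbr (fst p) (fst q) \<and> snd q < snd p)"
  have reach: "\<exists>L. 0 < L \<and> L \<le> s \<and> topples T \<eta> L y \<and> Tleft T \<eta> L y = real (N y) - 1"
    if h1: "0 \<le> s" and h2: "N y \<le> T s y \<eta>" for s y
  proof -
    obtain L where L: "0 < L" "L \<le> s" "N y \<le> T L y \<eta>" "\<forall>r. 0 \<le> r \<and> r < L \<longrightarrow> T r y \<eta> < N y"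
      using first_reach[OF tp h1 h2 pos] by auto
    show ?thesis using first_reach_topples[OF tp L(1) L(3) pos L(4)] L(1,2) by auto
  qed
  have init: "\<exists>p. P 0 p"
  proof -
    obtain t0 where "t0 \<ge> 0" "T t0 undefined \<eta> = N undefined" using N by blast
    thus ?thesis using reach[of t0 undefined] unfolding P_def by auto
  qed
  have step: "\<exists>q. P (Suc n) q \<and> Q n p q" if Pp: "P n p" for n p
  proof -
    obtain x L where p: "p = (x, L)" by (cases p)
    have L: "0 < L" "topples T \<eta> L x" "Tleft T \<eta> L x = real (N x) - 1" using Pp unfolding P_def p by auto
    have "conf_left T \<eta> L x \<ge> 2 * real CARD('d)" using lg L unfolding legal_def by blast
    hence leg: "real (\<eta> x) - (2 * real CARD('d) * (real (N x) - 1) - (\<Sum>y\<in>{y. nbr x y}. Tleft T \<eta> L y))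
       \<ge> 2 * real CARD('d)"
      unfolding conf_left_def toppling_op_def L(3) .
    have "\<exists>y\<in>{y. nbr x y}. Tleft T \<eta> L y \<ge> real (N y)"
    proof (rule ccontr)
      assume "\<not> ?thesis"
      hence lt: "Tleft T \<eta> L y < real (N y)" if "nbr x y" for y using that by auto
      have "Tleft T \<eta> L y \<le> real (N y) - 1" if "nbr x y" for y
      proof -
        obtain s0 where s0: "0 \<le> s0" "s0 < L" "Tleft T \<eta> L y = real (T s0 y \<eta>)"
          using Tleft_rep[OF tp L(1), of y \<eta>] by (elim exE conjE) (rule that, assumption+)
        have "T s0 y \<eta> < N y" using lt[OF that] s0(3) by simp
        thus ?thesis using s0(3) by linarith
      qed
      hence le1: "1 \<le> real (N y) - Tleft T \<eta> L y" if "nbr x y" for y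
        using that by fastforce
      hence "(\<Sum>y\<in>{y. nbr x y}. (1::real)) \<le> (\<Sum>y\<in>{y. nbr x y}. real (N y) - Tleft T \<eta> L y)"
        by (intro sum_mono) simp
      also have "\<dots> = (\<Sum>y\<in>{y. nbr x y}. real (N y)) - (\<Sum>y\<in>{y. nbr x y}. Tleft T \<eta> L y)"
        by (rule sum_subtractf)
      finally have "real (card {y. nbr x y}) \<le> (\<Sum>y\<in>{y. nbr x y}. real (N y)) - (\<Sum>y\<in>{y. nbr x y}. Tleft T \<eta> L y)"
        by simp
      moreover have "real (2 * CARD('d)) \<le> real (card {y. nbr x y})"
        using nbr_card[of x] by linarith
      ultimately show False using leg stab[of x] by (simp add: algebra_simps)
    qed
    then obtain y where y: "nbr x y" "Tleft T \<eta> L y \<ge> real (N y)" by auto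
    obtain s0 where s0: "0 \<le> s0" "s0 < L" "Tleft T \<eta> L y = real (T s0 y \<eta>)"
      using Tleft_rep[OF tp L(1), of y \<eta>] by (elim exE conjE) (rule that, assumption+)
    have "N y \<le> T s0 y \<eta>" using y(2) s0(3) by linarith
    then obtain L' where L': "0 < L'" "L' \<le> s0" "topples T \<eta> L' y" "Tleft T \<eta> L' y = real (N y) - 1"
      using reach[OF s0(1)] by blast
    show ?thesis
      by (rule exI[of _ "(y, L')"]) (use L' s0 y in \<open>auto simp: P_def Q_def p\<close>)
  qed
  obtain f where f: "\<And>n. P n (f n) \<and> Q n (f n) (f (Suc n))"
    using dependent_nat_choice[of P Q, OF init step] by blast
  show False
  proof (rule tp_chain[OF tp, of \<eta> "\<lambda>i. snd (f i)" "\<lambda>i. fst (f i)"])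
    fix i
    show "topples T \<eta> (snd (f i)) (fst (f i))" using f[of i] unfolding P_def by auto
    show "snd (f (Suc i)) < snd (f i)" using f[of i] unfolding Q_def by auto
    show "nbr (fst (f i)) (fst (f (Suc i)))" using f[of i] unfolding Q_def by auto
  qed
qed



theorem theorem2p8:
  fixes \<eta> :: "('d::finite) config" and T T' :: "'d procedure"
  assumes "toppling_procedure T" and "toppling_procedure T'"
    and "legal T" and "legal T'"
    and "finite_for T \<eta>" and "finite_for T' \<eta>"
  shows "(stabilizing T \<eta> \<longrightarrow> (\<forall>x. Tinf T' \<eta> x \<le> Tinf T \<eta> x))
       \<and> (stabilizing T \<eta> \<and> stabilizing T' \<eta> \<longrightarrow>
            (\<forall>x. Tinf T' \<eta> x = Tinf T \<eta> x) \<and> conf_inf T' \<eta> = conf_inf T \<eta>)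
       \<and> (stabilizable \<eta> \<longrightarrow>
            \<not> (\<exists>S. toppling_procedure S \<and> legal S \<and> \<not> finite_for S \<eta>))
       \<and> (stabilizing T \<eta> \<longrightarrow> (\<exists>x. Tinf T \<eta> x = 0))"
proof -
  note tpT = assms(1) and tpT' = assms(2) and lgT = assms(3) and lgT' = assms(4)
  obtain N where N: "\<forall>x. (\<forall>t\<ge>0. T t x \<eta> \<le> N x) \<and> (\<exists>t0\<ge>0. T t0 x \<eta> = N x) \<and> Tinf T \<eta> x = real (N x)"
    using N_exists[OF tpT assms(5)] by blast
  obtain N' where N': "\<forall>x. (\<forall>t\<ge>0. T' t x \<eta> \<le> N' x) \<and> (\<exists>t0\<ge>0. T' t0 x \<eta> = N' x) \<and> Tinf T' \<eta> x = real (N' x)"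
    using N_exists[OF tpT' assms(6)] by blast
  have p1: "\<forall>x. Tinf T' \<eta> x \<le> Tinf T \<eta> x" if st: "stabilizing T \<eta>"
  proof
    fix x
    have stab: "real (\<eta> z) - (2 * real CARD('d) * real (N z) - (\<Sum>y\<in>{y. nbr z y}. real (N y)))
      \<le> 2 * real CARD('d) - 1" for z
      by (rule stab_N[of T]) (use st N in \<open>auto simp: stabilizing_def\<close>)
    obtain t0 where "t0 \<ge> 0" "T' t0 x \<eta> = N' x" using N' by blast
    hence "N' x \<le> N x" using least_action[OF tpT' lgT' stab, of t0 x] by simp
    thus "Tinf T' \<eta> x \<le> Tinf T \<eta> x" using N N' by simp
  qed
  have p1': "\<forall>x. Tinf T \<eta> x \<le> Tinf T' \<eta> x" if st: "stabilizing T' \<eta>"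
  proof
    fix x
    have stab: "real (\<eta> z) - (2 * real CARD('d) * real (N' z) - (\<Sum>y\<in>{y. nbr z y}. real (N' y)))
      \<le> 2 * real CARD('d) - 1" for z
      by (rule stab_N[of T']) (use st N' in \<open>auto simp: stabilizing_def\<close>)
    obtain t0 where "t0 \<ge> 0" "T t0 x \<eta> = N x" using N by blast
    hence "N x \<le> N' x" using least_action[OF tpT lgT stab, of t0 x] by simp
    thus "Tinf T \<eta> x \<le> Tinf T' \<eta> x" using N N' by simp
  qed
  have p2: "(\<forall>x. Tinf T' \<eta> x = Tinf T \<eta> x) \<and> conf_inf T' \<eta> = conf_inf T \<eta>"
    if "stabilizing T \<eta>" "stabilizing T' \<eta>"
  proof -
    have eq: "\<forall>x. Tinf T' \<eta> x = Tinf T \<eta> x" using p1[OF that(1)] p1'[OF that(2)] by (meson order_antisym)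
    hence "Tinf T' \<eta> = Tinf T \<eta>" by auto
    hence "conf_inf T' \<eta> = conf_inf T \<eta>" unfolding conf_inf_def by simp
    with eq show ?thesis by simp
  qed
  have p3: "\<not> (\<exists>S. toppling_procedure S \<and> legal S \<and> \<not> finite_for S \<eta>)" if sb: "stabilizable \<eta>"
  proof
    assume "\<exists>S. toppling_procedure S \<and> legal S \<and> \<not> finite_for S \<eta>"
    then obtain S where S: "toppling_procedure S" "legal S" "\<not> finite_for S \<eta>" by blast
    obtain T0 where T0: "toppling_procedure T0" "legal T0" "stabilizing T0 \<eta>"
      using sb unfolding stabilizable_def by blast
    have fin0: "finite_for T0 \<eta>" using T0(3) by (simp add: stabilizing_def)
    obtain N0 where N0: "\<forall>x. (\<forall>t\<ge>0. T0 t x \<eta> \<le> N0 x) \<and> (\<exists>t0\<ge>0. T0 t0 x \<eta> = N0 x) \<and> Tinf T0 \<eta> x = real (N0 x)"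
      using N_exists[OF T0(1) fin0] by blast
    have stab: "real (\<eta> z) - (2 * real CARD('d) * real (N0 z) - (\<Sum>y\<in>{y. nbr z y}. real (N0 y)))
      \<le> 2 * real CARD('d) - 1" for z
      by (rule stab_N[of T0]) (use T0 N0 in \<open>auto simp: stabilizing_def\<close>)
    have "finite_for S \<eta>" unfolding finite_for_def
    proof
      fix x
      obtain t0 where "((\<lambda>t. real (S t x \<eta>)) \<longlongrightarrow> real (S t0 x \<eta>)) at_top"
        using bounded_stuff[OF S(1) least_action[OF S(1) S(2) stab], of x] by blast
      thus "\<exists>L. ((\<lambda>t. real (S t x \<eta>)) \<longlongrightarrow> L) at_top" by blast
    qed
    with S(3) show False by simp
  qed
  have p4: "\<exists>x. Tinf T \<eta> x = 0" if st: "stabilizing T \<eta>"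
  proof -
    have stab: "real (\<eta> z) - (2 * real CARD('d) * real (N z) - (\<Sum>y\<in>{y. nbr z y}. real (N y)))
      \<le> 2 * real CARD('d) - 1" for z
      by (rule stab_N[of T]) (use st N in \<open>auto simp: stabilizing_def\<close>)
    obtain x where "N x = 0" using some_zero[OF tpT lgT _ stab] N by blast
    thus ?thesis using N by auto
  qed
  show ?thesis using p1 p2 p3 p4 by blast
qed


end
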